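(* Let $a,b,c,q>0$, $0<p<1$, and consider $$\frac{dx}{dt}=x\left[\frac{(1-x)(x-p)}{1+qy}-ay\right],\qquad \frac{dy}{dt}=by\,(1-y-cx).$$ With $A_1=ac^2q+1$, $A_2=-(2acq+ac+p+1)$, $A_3=a+aq+p$, $\Delta=A_2^2-4A_1A_3$, and $E_{1*}=(x_1,1-cx_1)$, $E_{2*}=(x_2,1-cx_2)$ (for $\Delta>0$, $x_{1,2}=\frac{-A_2\mp\sqrt\Delta}{2A_1}$), $E_{3*}=(x_3,1-cx_3)$ (for $\Delta=0$, $x_3=-\frac{A_2}{2A_1}$): whenever these points are positive equilibria of the system, 1. $E_{1*}$ is a saddle; 2. $E_{2*}$ is a stable node; 3. $E_{3*}$ is a saddle-node.
   Context: Positive equilibrium means an equilibrium with both coordinates strictly positive. The conditions under which $E_{1*},E_{2*},E_{3*}$ are positive equilibria are those of the existence classification: e.g. for $\Delta>0$, $2A_1+A_2>0$, $0<c<1$ both $E_{1*},E_{2*}$ are positive; for $\Delta=0$, $2A_1+A_2>0$, $0<c<1$, $E_{3*}$ is positive. *)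

theory Defs
  imports "HOL-Analysis.Analysis"
begin

text \<open>A planar autonomous system  x' = P x y,  y' = Q x y  with smooth right-hand sides.
  Partial derivatives are taken with the library's one-variable derivative operator deriv.\<close>

definition pdx :: "(real \<Rightarrow> real \<Rightarrow> real) \<Rightarrow> real \<Rightarrow> real \<Rightarrow> real" where
  "pdx F x y = deriv (\<lambda>t. F t y) x"

definition pdy :: "(real \<Rightarrow> real \<Rightarrow> real) \<Rightarrow> real \<Rightarrow> real \<Rightarrow> real" where
  "pdy F x y = deriv (\<lambda>t. F x t) y"

definition is_equilibrium :: "(real \<Rightarrow> real \<Rightarrow> real) \<Rightarrow> (real \<Rightarrow> real \<Rightarrow> real) \<Rightarrow> real \<Rightarrow> real \<Rightarrow> bool" where
  "is_equilibrium P Q x y \<longleftrightarrow> P x y = 0 \<and> Q x y = 0"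

definition positive_equilibrium :: "(real \<Rightarrow> real \<Rightarrow> real) \<Rightarrow> (real \<Rightarrow> real \<Rightarrow> real) \<Rightarrow> real \<Rightarrow> real \<Rightarrow> bool" where
  "positive_equilibrium P Q x y \<longleftrightarrow> is_equilibrium P Q x y \<and> x > 0 \<and> y > 0"

definition jac_tr :: "(real \<Rightarrow> real \<Rightarrow> real) \<Rightarrow> (real \<Rightarrow> real \<Rightarrow> real) \<Rightarrow> real \<Rightarrow> real \<Rightarrow> real" where
  "jac_tr P Q x y = pdx P x y + pdy Q x y"

definition jac_det :: "(real \<Rightarrow> real \<Rightarrow> real) \<Rightarrow> (real \<Rightarrow> real \<Rightarrow> real) \<Rightarrow> real \<Rightarrow> real \<Rightarrow> real" where
  "jac_det P Q x y = pdx P x y * pdy Q x y - pdy P x y * pdx Q x y"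

definition is_saddle :: "(real \<Rightarrow> real \<Rightarrow> real) \<Rightarrow> (real \<Rightarrow> real \<Rightarrow> real) \<Rightarrow> real \<Rightarrow> real \<Rightarrow> bool" where
  "is_saddle P Q x y \<longleftrightarrow> is_equilibrium P Q x y \<and>
     (\<exists>l1 l2::real. l1 < 0 \<and> 0 < l2 \<and> l1 + l2 = jac_tr P Q x y \<and> l1 * l2 = jac_det P Q x y)"

definition is_stable_node :: "(real \<Rightarrow> real \<Rightarrow> real) \<Rightarrow> (real \<Rightarrow> real \<Rightarrow> real) \<Rightarrow> real \<Rightarrow> real \<Rightarrow> bool" where
  "is_stable_node P Q x y \<longleftrightarrow> is_equilibrium P Q x y \<and>
     (\<exists>l1 l2::real. l1 < 0 \<and> l2 < 0 \<and> l1 + l2 = jac_tr P Q x y \<and> l1 * l2 = jac_det P Q x y)"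

text \<open>Saddle-node (fold) equilibrium: the Jacobian J has a simple zero eigenvalue
  (det J = 0, tr J \<noteq> 0) and the quadratic coefficient of the centre-manifold reduced
  equation, w \<cdot> D^2 F(v,v) with J v = 0, w^T J = 0, v,w \<noteq> 0, is nonzero.\<close>

definition hess_form :: "(real \<Rightarrow> real \<Rightarrow> real) \<Rightarrow> real \<Rightarrow> real \<Rightarrow> real \<Rightarrow> real \<Rightarrow> real" where
  "hess_form F x y v1 v2 =
     v1^2 * pdx (pdx F) x y + 2 * v1 * v2 * pdy (pdx F) x y + v2^2 * pdy (pdy F) x y"

definition is_saddle_node :: "(real \<Rightarrow> real \<Rightarrow> real) \<Rightarrow> (real \<Rightarrow> real \<Rightarrow> real) \<Rightarrow> real \<Rightarrow> real \<Rightarrow> bool" where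
  "is_saddle_node P Q x y \<longleftrightarrow> is_equilibrium P Q x y \<and>
     jac_det P Q x y = 0 \<and> jac_tr P Q x y \<noteq> 0 \<and>
     (\<exists>v1 v2 w1 w2::real. (v1, v2) \<noteq> (0, 0) \<and> (w1, w2) \<noteq> (0, 0) \<and>
        pdx P x y * v1 + pdy P x y * v2 = 0 \<and> pdx Q x y * v1 + pdy Q x y * v2 = 0 \<and>
        w1 * pdx P x y + w2 * pdx Q x y = 0 \<and> w1 * pdy P x y + w2 * pdy Q x y = 0 \<and>
        w1 * hess_form P x y v1 v2 + w2 * hess_form Q x y v1 v2 \<noteq> 0)"

definition fP :: "real \<Rightarrow> real \<Rightarrow> real \<Rightarrow> real \<Rightarrow> real \<Rightarrow> real" where
  "fP a p q x y = x * ((1 - x) * (x - p) / (1 + q * y) - a * y)"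

definition fQ :: "real \<Rightarrow> real \<Rightarrow> real \<Rightarrow> real \<Rightarrow> real" where
  "fQ b c x y = b * y * (1 - y - c * x)"

definition A1 :: "real \<Rightarrow> real \<Rightarrow> real \<Rightarrow> real" where
  "A1 a c q = a * c^2 * q + 1"

definition A2 :: "real \<Rightarrow> real \<Rightarrow> real \<Rightarrow> real \<Rightarrow> real" where
  "A2 a c p q = - (2 * a * c * q + a * c + p + 1)"

definition A3 :: "real \<Rightarrow> real \<Rightarrow> real \<Rightarrow> real" where
  "A3 a p q = a + a * q + p"

definition Disc :: "real \<Rightarrow> real \<Rightarrow> real \<Rightarrow> real \<Rightarrow> real" where
  "Disc a c p q = (A2 a c p q)^2 - 4 * A1 a c q * A3 a p q"

end

theory Submission
  imports Defs
begin

lemma Px: "pdx (fP a p q) x y = ((1-x)*(x-p) + x*(1+p-2*x))/(1+q*y) - a*y"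
proof -
  define D where "D = 1+q*y"
  have "((\<lambda>t. t*((1-t)*(t-p)/D - a*y)) has_field_derivative ((1-x)*(x-p) + x*(1+p-2*x))/D - a*y) (at x)"
    by (rule DERIV_cdivide derivative_eq_intros refl | simp)+ (simp add: algebra_simps add_divide_distrib diff_divide_distrib)
  then show ?thesis unfolding pdx_def fP_def D_def[symmetric] by (rule DERIV_imp_deriv)
qed

lemma Py: "1+q*y \<noteq> 0 \<Longrightarrow> pdy (fP a p q) x y = x*(-(q*((1-x)*(x-p)))/(1+q*y)^2 - a)"
  unfolding pdy_def fP_def
  by (rule DERIV_imp_deriv) (auto intro!: derivative_eq_intros simp: field_simps power2_eq_square)

lemma Qx: "pdx (fQ b c) x y = -b*c*y"
  unfolding pdx_def fQ_def
  by (rule DERIV_imp_deriv) (auto intro!: derivative_eq_intros simp: field_simps)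

lemma Qy: "pdy (fQ b c) x y = b*(1-y-c*x) - b*y"
  unfolding pdy_def fQ_def
  by (rule DERIV_imp_deriv) (auto intro!: derivative_eq_intros simp: field_simps)

lemma Pxx: "pdx (pdx (fP a p q)) x y = (2+2*p-6*x)/(1+q*y)"
proof -
  define D where "D = 1+q*y"
  have "((\<lambda>t. ((1-t)*(t-p) + t*(1+p-2*t))/D - a*y) has_field_derivative (2+2*p-6*x)/D) (at x)"
    by (rule DERIV_cdivide derivative_eq_intros refl | simp)+
  then show ?thesis unfolding pdx_def[of "pdx _"] Px D_def[symmetric] by (rule DERIV_imp_deriv)
qed

lemma Pxy: "1+q*y \<noteq> 0 \<Longrightarrow> pdy (pdx (fP a p q)) x y = -(q*((1-x)*(x-p) + x*(1+p-2*x)))/(1+q*y)^2 - a"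
  unfolding pdy_def[of "pdx _"] Px
  by (rule DERIV_imp_deriv) (auto intro!: derivative_eq_intros simp: field_simps power2_eq_square)

lemma Pyy: assumes "1+q*y > 0" shows "pdy (pdy (fP a p q)) x y = x*2*q^2*((1-x)*(x-p))/(1+q*y)^3"
proof -
  have ev: "\<forall>\<^sub>F u in nhds y. pdy (fP a p q) x u = x*(-(q*((1-x)*(x-p)))/(1+q*u)^2 - a)"
  proof -
    have "open {u. 1+q*u > 0}" by (intro open_Collect_less continuous_intros)
    moreover have "y \<in> {u. 1+q*u > 0}" using assms by simp
    ultimately have "eventually (\<lambda>u. u \<in> {u. 1+q*u > 0}) (nhds y)" by (rule eventually_nhds_in_open)
    then show ?thesis by eventually_elim (rule Py, simp)
  qed
  have "pdy (pdy (fP a p q)) x y = deriv (\<lambda>u. x*(-(q*((1-x)*(x-p)))/(1+q*u)^2 - a)) y"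
    unfolding pdy_def[of "pdy _"] by (rule deriv_cong_ev[OF ev refl])
  also have "\<dots> = x*2*q^2*((1-x)*(x-p))/(1+q*y)^3"
  proof (intro DERIV_imp_deriv)
    define D where "D = 1+q*y"
    have D: "D > 0" using assms D_def by simp
    show "((\<lambda>u. x*(-(q*((1-x)*(x-p)))/(1+q*u)^2 - a)) has_field_derivative x*2*q^2*((1-x)*(x-p))/(1+q*y)^3) (at y)"
      unfolding D_def[symmetric]
      apply (rule derivative_eq_intros refl)+
      apply (simp only: D_def[symmetric], use D in simp)
      apply (rule derivative_eq_intros refl)+
      apply (simp only: D_def[symmetric])
      using D by (simp add: field_simps power2_eq_square power3_eq_cube)
  qed
  finally show ?thesis .
qed

lemma Qxx: "pdx (pdx (fQ b c)) x y = 0"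
  unfolding pdx_def[of "pdx _"] Qx by simp

lemma Qxy: "pdy (pdx (fQ b c)) x y = -b*c"
  unfolding pdy_def[of "pdx _"] Qx
  by (rule DERIV_imp_deriv) (auto intro!: derivative_eq_intros simp: field_simps)

lemma Qyy: "pdy (pdy (fQ b c)) x y = -2*b"
  unfolding pdy_def[of "pdy _"] Qy
  by (rule DERIV_imp_deriv) (auto intro!: derivative_eq_intros simp: field_simps)

lemma saddle_ex:
  fixes t d :: real assumes "d < 0"
  shows "\<exists>l1 l2::real. l1 < 0 \<and> 0 < l2 \<and> l1 + l2 = t \<and> l1 * l2 = d"
proof -
  define r where "r = sqrt (t^2 - 4*d)"
  have "t^2 \<ge> 0" by simp
  hence nn: "t^2 - 4*d \<ge> 0" using assms by linarith
  have r2: "r^2 = t^2 - 4*d" unfolding r_def using nn by simp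
  have "sqrt (t^2) < r" unfolding r_def by (rule real_sqrt_less_mono) (use assms in simp)
  hence rt: "\<bar>t\<bar> < r" by simp
  show ?thesis
    by (rule exI[of _ "(t - r)/2"], rule exI[of _ "(t + r)/2"])
       (use rt r2 in \<open>auto simp: field_simps power2_eq_square\<close>)
qed

lemma node_ex:
  fixes t d :: real assumes "t < 0" "d > 0" "t^2 - 4*d \<ge> 0"
  shows "\<exists>l1 l2::real. l1 < 0 \<and> l2 < 0 \<and> l1 + l2 = t \<and> l1 * l2 = d"
proof -
  define r where "r = sqrt (t^2 - 4*d)"
  have r2: "r^2 = t^2 - 4*d" unfolding r_def using assms by simp
  have r0: "r \<ge> 0" unfolding r_def using assms(3) by simp
  have "r < sqrt (t^2)" unfolding r_def using assms(2) by (intro real_sqrt_less_mono) linarith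
  hence rt: "r < -t" using assms by simp
  show ?thesis
    by (rule exI[of _ "(t - r)/2"], rule exI[of _ "(t + r)/2"])
       (use rt r2 r0 in \<open>auto simp: field_simps power2_eq_square\<close>)
qed

lemma eq_facts:
  fixes a b c p q x :: real
  assumes "a > 0" "b > 0" "c > 0" "q > 0" "x > 0" "1 - c*x > 0"
    and eq: "fP a p q x (1 - c*x) = 0"
  defines "y \<equiv> 1 - c*x"
  shows "(1-x)*(x-p) = a*y*(1+q*y)"
    "pdx (fP a p q) x y = x*(1+p-2*x)/(1+q*y)"
    "pdy (fP a p q) x y = -x*a*(2*q*y+1)/(1+q*y)"
    "pdx (fQ b c) x y = -b*c*y"
    "pdy (fQ b c) x y = -b*y"
proof -
  have D: "1+q*y > 0" using assms by (simp add: y_def add_pos_pos)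
  have "(1-x)*(x-p)/(1+q*y) - a*y = 0" using eq assms(5) unfolding fP_def y_def by simp
  then show M: "(1-x)*(x-p) = a*y*(1+q*y)" using D by (simp add: field_simps)
  show "pdx (fP a p q) x y = x*(1+p-2*x)/(1+q*y)"
    unfolding Px using M D by (simp add: field_simps)
  show "pdy (fP a p q) x y = -x*a*(2*q*y+1)/(1+q*y)"
  proof -
    define D where "D = 1+q*y"
    have D0: "D > 0" using D D_def by simp
    have "pdy (fP a p q) x y = x*(-(q*(a*y*D))/D^2 - a)" using D by (subst Py) (simp_all add: M D_def)
    also have "\<dots> = -x*a*(q*y+D)/D" using D0 by (simp add: field_simps power2_eq_square)
    finally show ?thesis by (simp add: D_def algebra_simps)
  qed
  show "pdx (fQ b c) x y = -b*c*y" by (rule Qx)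
  show "pdy (fQ b c) x y = -b*y" unfolding Qy y_def by (simp add: algebra_simps)
qed

lemma key_id: "1+p-2*x + c*a*(2*q*(1-c*x)+1) = -(2*A1 a c q*x + A2 a c p q)"
  unfolding A1_def A2_def by (simp add: algebra_simps power2_eq_square)

lemma jac_facts:
  fixes a b c p q x :: real
  assumes "a > 0" "b > 0" "c > 0" "q > 0"
    and pe: "positive_equilibrium (fP a p q) (fQ b c) x (1 - c*x)"
  defines "y \<equiv> 1 - c*x"
  defines "r \<equiv> 2*A1 a c q*x + A2 a c p q"
  shows "jac_det (fP a p q) (fQ b c) x y = b*x*y*r/(1+q*y)"
    "jac_tr (fP a p q) (fQ b c) x y = -(x*(r + c*a*(2*q*y+1))/(1+q*y)) - b*y"
proof -
  have x: "x > 0" and y: "y > 0" and eq: "fP a p q x y = 0"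
    using pe unfolding positive_equilibrium_def is_equilibrium_def y_def by auto
  have D: "1+q*y > 0" using assms y by (simp add: add_pos_pos)
  note F = eq_facts[OF assms(1-4) x y[unfolded y_def] eq[unfolded y_def], folded y_def]
  have k: "1+p-2*x = -r - c*a*(2*q*y+1)" using key_id[of p x c a q] unfolding r_def y_def by linarith
  show "jac_det (fP a p q) (fQ b c) x y = b*x*y*r/(1+q*y)"
  proof -
    define D where "D = 1+q*y"
    have D0: "D > 0" using D D_def by simp
    show ?thesis unfolding jac_det_def F(2-5) k D_def[symmetric] using D0 by (simp add: field_simps)
  qed
  show "jac_tr (fP a p q) (fQ b c) x y = -(x*(r + c*a*(2*q*y+1))/(1+q*y)) - b*y"
  proof -
    define D where "D = 1+q*y"
    have D0: "D > 0" using D D_def by simp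
    show ?thesis unfolding jac_tr_def F(2-5) k D_def[symmetric] using D0 by (simp add: field_simps)
  qed
qed

lemma sn_lemma:
  fixes a b c p q x :: real
  assumes "a > 0" "b > 0" "c > 0" "q > 0"
    and pe: "positive_equilibrium (fP a p q) (fQ b c) x (1 - c*x)"
    and r0: "2*A1 a c q*x + A2 a c p q = 0"
  shows "is_saddle_node (fP a p q) (fQ b c) x (1 - c*x)"
proof -
  define y where "y = 1 - c*x"
  have x: "x > 0" and y: "y > 0" and eq: "fP a p q x y = 0"
    using pe unfolding positive_equilibrium_def is_equilibrium_def y_def by auto
  have D: "1+q*y > 0" using assms y by (simp add: add_pos_pos)
  define D where "D = 1+q*y"
  have D0: "D > 0" using D D_def by simp
  note F = eq_facts[OF assms(1-4) x y[unfolded y_def] eq[unfolded y_def], folded y_def]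
  have k: "1+p-2*x = - c*a*(2*q*y+1)" using key_id[of p x c a q] r0 unfolding y_def by linarith
  have pk: "p = 2*x - 1 - c*a*(2*q*y+1)" using k by linarith
  have A1: "A1 a c q > 0" unfolding A1_def using assms by (simp add: add_pos_pos)
  note J = jac_facts[OF assms(1-4) pe, folded y_def, unfolded r0]
  define P1 where "P1 = pdx (fP a p q) x y"
  define P2 where "P2 = pdy (fP a p q) x y"
  have P1: "P1 = x*(1+p-2*x)/D" unfolding P1_def D_def by (rule F(2))
  have P2: "P2 = -x*a*(2*q*y+1)/D" unfolding P2_def D_def by (rule F(3))
  have v: "P1 * 1 + P2 * (-c) = 0" unfolding P1 P2 k using D0 by (simp add: field_simps)
  have hQ: "hess_form (fQ b c) x y 1 (-c) = 0"
    unfolding hess_form_def Qxx Qxy Qyy by (simp add: algebra_simps power2_eq_square)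
  have hP: "hess_form (fP a p q) x y 1 (-c) = -2*x*A1 a c q/D"
  proof -
    have M: "(1-x)*(x-p) = a*y*D" using F(1) D_def by simp
    have "hess_form (fP a p q) x y 1 (-c) =
        (2+2*p-6*x)/D - 2*c*(-(q*(a*y*D + x*(1+p-2*x)))/D^2 - a) + c^2*(x*2*q^2*(a*y*D)/D^3)"
      unfolding hess_form_def Pxx Pxy[OF D[THEN less_imp_neq, symmetric]] Pyy[OF D] M D_def[symmetric]
      using D0 by (simp add: field_simps)
    also have "\<dots> = -2*x*A1 a c q/D"
    proof -
      have "(2+2*p-6*x)/D - 2*c*(-(q*(a*y*D + x*(1+p-2*x)))/D^2 - a) + c^2*(x*2*q^2*(a*y*D)/D^3)
          = (2*(1+p-2*x) - 2*x)/D + 2*c*q*a*y/D + 2*c*q*x*(1+p-2*x)/D^2 + 2*c*a + 2*c^2*x*q^2*a*y/D^2"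
        using D0 by (simp add: field_simps power2_eq_square power3_eq_cube)
      also have "\<dots> = (2*(- c*a*(2*q*y+1)) - 2*x)/D + 2*c*q*a*y/D + 2*c*q*x*(- c*a*(2*q*y+1))/D^2 + 2*c*a + 2*c^2*x*q^2*a*y/D^2"
        unfolding k ..
      also have "\<dots> = ((2*(- c*a*(2*q*y+1)) - 2*x)*D + 2*c*q*a*y*D + 2*c*q*x*(- c*a*(2*q*y+1)) + 2*c*a*D^2 + 2*c^2*x*q^2*a*y)/D^2"
        using D0 by (simp add: field_simps power2_eq_square)
      also have "((2*(- c*a*(2*q*y+1)) - 2*x)*D + 2*c*q*a*y*D + 2*c*q*x*(- c*a*(2*q*y+1)) + 2*c*a*D^2 + 2*c^2*x*q^2*a*y) = (-2*x*A1 a c q)*D"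
        unfolding A1_def D_def by algebra
      also have "(-2*x*A1 a c q)*D/D^2 = -2*x*A1 a c q/D"
        using D0 by (simp add: power2_eq_square)
      finally show ?thesis .
    qed
    finally show ?thesis .
  qed
  have w1: "(b*y) * P1 + P2 * (-b*c*y) = 0" unfolding P1 P2 k using D0 by (simp add: field_simps)
  have w2: "(b*y) * P2 + P2 * (-b*y) = 0" by simp
  have hw: "(b*y) * hess_form (fP a p q) x y 1 (-c) + P2 * hess_form (fQ b c) x y 1 (-c) \<noteq> 0"
    unfolding hP hQ using assms x y D0 A1 by simp
  have tr: "jac_tr (fP a p q) (fQ b c) x y \<noteq> 0"
  proof -
    have "x*(0 + c*a*(2*q*y+1))/(1+q*y) > 0" using assms x y D by (intro divide_pos_pos mult_pos_pos) (auto intro!: add_pos_pos mult_pos_pos)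
    moreover have "b*y > 0" using assms y by simp
    ultimately show ?thesis unfolding J(2) by linarith
  qed
  show ?thesis
    unfolding is_saddle_node_def y_def[symmetric]
    apply (intro conjI)
    subgoal using pe unfolding positive_equilibrium_def y_def by simp
    subgoal unfolding J(1) by simp
    subgoal by (rule tr)
    apply (rule exI[of _ 1], rule exI[of _ "-c"], rule exI[of _ "b*y"], rule exI[of _ P2])
    using v w1 w2 hw assms y unfolding F(4) F(5) P1_def[symmetric] P2_def[symmetric]
    by (auto simp: algebra_simps)
qed

theorem theorem4p3:
  fixes a b c p q :: real
  assumes "a > 0" and "b > 0" and "c > 0" and "q > 0" and "0 < p" and "p < 1"
  defines "P \<equiv> fP a p q" and "Q \<equiv> fQ b c"
      and "x1 \<equiv> (- A2 a c p q - sqrt (Disc a c p q)) / (2 * A1 a c q)"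
      and "x2 \<equiv> (- A2 a c p q + sqrt (Disc a c p q)) / (2 * A1 a c q)"
      and "x3 \<equiv> - A2 a c p q / (2 * A1 a c q)"
  shows "(Disc a c p q > 0 \<and> positive_equilibrium P Q x1 (1 - c * x1) \<longrightarrow>
            is_saddle P Q x1 (1 - c * x1))
       \<and> (Disc a c p q > 0 \<and> positive_equilibrium P Q x2 (1 - c * x2) \<longrightarrow>
            is_stable_node P Q x2 (1 - c * x2))
       \<and> (Disc a c p q = 0 \<and> positive_equilibrium P Q x3 (1 - c * x3) \<longrightarrow>
            is_saddle_node P Q x3 (1 - c * x3))"
proof (intro conjI impI)
  have A1: "A1 a c q > 0" unfolding A1_def using assms by (simp add: add_pos_pos)
  have y_pos: "\<And>x. positive_equilibrium P Q x (1 - c*x) \<Longrightarrow> x > 0 \<and> 1 - c*x > 0"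
    unfolding positive_equilibrium_def by auto
  {
    assume h: "Disc a c p q > 0 \<and> positive_equilibrium P Q x1 (1 - c * x1)"
    have r: "2*A1 a c q*x1 + A2 a c p q = - sqrt (Disc a c p q)"
      unfolding x1_def using A1 by (simp add: field_simps)
    have pe: "positive_equilibrium (fP a p q) (fQ b c) x1 (1 - c*x1)" using h P_def Q_def by simp
    note J = jac_facts[OF assms(1,2,3,4) pe, unfolded r]
    have xy: "x1 > 0" "1 - c*x1 > 0" using y_pos h by auto
    have "b*x1*(1-c*x1)*(- sqrt (Disc a c p q))/(1+q*(1-c*x1)) < 0"
    proof (rule divide_neg_pos)
      have "b*x1*(1-c*x1) > 0" using xy assms(2) by simp
      moreover have "sqrt (Disc a c p q) > 0" using h by simp
      ultimately show "b*x1*(1-c*x1)*(- sqrt (Disc a c p q)) < 0" by (simp add: mult_pos_neg)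
      show "1+q*(1-c*x1) > 0" using xy assms(4) by (simp add: add_pos_pos)
    qed
    then show "is_saddle P Q x1 (1 - c * x1)"
      unfolding is_saddle_def P_def Q_def J using pe saddle_ex
      unfolding positive_equilibrium_def by blast
  }
  {
    assume h: "Disc a c p q > 0 \<and> positive_equilibrium P Q x2 (1 - c * x2)"
    have r: "2*A1 a c q*x2 + A2 a c p q = sqrt (Disc a c p q)"
      unfolding x2_def using A1 by (simp add: field_simps)
    have pe: "positive_equilibrium (fP a p q) (fQ b c) x2 (1 - c*x2)" using h P_def Q_def by simp
    note J = jac_facts[OF assms(1,2,3,4) pe, unfolded r]
    have xy: "x2 > 0" "1 - c*x2 > 0" using y_pos h by auto
    define y where "y = 1 - c*x2"
    define D where "D = 1 + q*y"
    define sd where "sd = sqrt (Disc a c p q)"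
    define E where "E = c*a*(2*q*y+1)"
    have D0: "D > 0" unfolding D_def using xy assms y_def by (simp add: add_pos_pos)
    have sd0: "sd > 0" unfolding sd_def using h by simp
    have E0: "E > 0" unfolding E_def using xy assms y_def by (simp add: add_pos_pos)
    define R where "R = x2* sd/D"
    define S where "S = x2*(sd+E)/D"
    define V where "V = b*y"
    have R0: "R > 0" unfolding R_def using xy D0 sd0 by simp
    have SR: "S \<ge> R" unfolding S_def R_def using xy D0 E0 by (simp add: divide_right_mono)
    have V0: "V > 0" unfolding V_def y_def using xy assms by simp
    have det: "jac_det P Q x2 y = V*R" unfolding P_def Q_def y_def[symmetric] J(1)[folded y_def] V_def R_def D_def sd_def by simp
    have tr: "jac_tr P Q x2 y = -S - V" unfolding P_def Q_def y_def[symmetric] J(2)[folded y_def] V_def S_def D_def sd_def E_def by simp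
    have "(S+V)^2 - 4*(V*R) \<ge> 0"
    proof -
      have "(S+V)^2 - 4*(V*R) \<ge> (S+V)^2 - 4*(V*S)" using SR V0 by (simp add: mult_left_mono)
      moreover have "(S+V)^2 - 4*(V*S) = (S-V)^2" by (simp add: power2_eq_square algebra_simps)
      ultimately show ?thesis by (metis zero_le_power2 order_trans)
    qed
    moreover have "(V+S)^2 = (S+V)^2" by (simp add: add.commute)
    ultimately have "(-S-V)^2 - 4*(V*R) \<ge> 0" by (simp add: power2_eq_square algebra_simps)
    then have "\<exists>l1 l2::real. l1 < 0 \<and> l2 < 0 \<and> l1 + l2 = jac_tr P Q x2 y \<and> l1 * l2 = jac_det P Q x2 y"
      unfolding det tr using R0 SR V0 by (intro node_ex) (auto simp: mult_pos_pos)
    then show "is_stable_node P Q x2 (1 - c * x2)"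
      unfolding is_stable_node_def y_def[symmetric] using pe P_def Q_def y_def
      unfolding positive_equilibrium_def by blast
  }
  {
    assume h: "Disc a c p q = 0 \<and> positive_equilibrium P Q x3 (1 - c * x3)"
    have r: "2*A1 a c q*x3 + A2 a c p q = 0"
      unfolding x3_def using A1 by (simp add: field_simps)
    have pe: "positive_equilibrium (fP a p q) (fQ b c) x3 (1 - c*x3)" using h P_def Q_def by simp
    show "is_saddle_node P Q x3 (1 - c * x3)"
      unfolding P_def Q_def by (rule sn_lemma[OF assms(1,2,3,4) pe r])
  }
qed

end
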